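(* Let $n,m$ be positive integers with $2(m+1)\le n$. Then $\gamma_{gr}(C_n^m)=n-2m$.
   Context: $C_n^m$ has vertex set $[n]$, distinct vertices adjacent iff their distance in the cycle $1,2,\dots,n,1$ is at most $m$. $\gamma_{gr}$ is the Grundy domination number: the maximum length of a sequence $(v_1,\dots,v_k)$ of distinct vertices whose set is dominating and such that each $N[v_i]\setminus\bigcup_{j<i}N[v_j]$ is non-empty ($N[\cdot]$ the closed neighborhood). *)

theory Defs
  imports Main
begin

definition cyc_dist :: "nat \<Rightarrow> nat \<Rightarrow> nat \<Rightarrow> nat" where
  "cyc_dist n i j = min (if i \<le> j then j - i else i - j) (n - (if i \<le> j then j - i else i - j))"

definition cpow_adj :: "nat \<Rightarrow> nat \<Rightarrow> nat \<Rightarrow> nat \<Rightarrow> bool" where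
  "cpow_adj n m u v \<longleftrightarrow> u \<in> {1..n} \<and> v \<in> {1..n} \<and> u \<noteq> v \<and> cyc_dist n u v \<le> m"

definition cpow_cnbhd :: "nat \<Rightarrow> nat \<Rightarrow> nat \<Rightarrow> nat set" where
  "cpow_cnbhd n m v = {u \<in> {1..n}. u = v \<or> cpow_adj n m v u}"

text \<open>Grundy dominating sequences of a graph given by vertex set V and closed neighbourhoods N.\<close>
definition grundy_dom_seq :: "'a set \<Rightarrow> ('a \<Rightarrow> 'a set) \<Rightarrow> 'a list \<Rightarrow> bool" where
  "grundy_dom_seq V N vs \<longleftrightarrow>
     distinct vs \<and> set vs \<subseteq> V \<and>
     (\<Union>v\<in>set vs. N v) = V \<and>
     (\<forall>i < length vs. N (vs ! i) - (\<Union>j<i. N (vs ! j)) \<noteq> {})"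

definition grundy_dom_number :: "'a set \<Rightarrow> ('a \<Rightarrow> 'a set) \<Rightarrow> nat" where
  "grundy_dom_number V N = Max (length ` {vs. grundy_dom_seq V N vs})"

end

theory Submission
  imports Defs
begin

lemma cnbhd_sub: "cpow_cnbhd n m v \<subseteq> {1..n}"
  unfolding cpow_cnbhd_def by auto

lemma cnbhd_fin: "finite (cpow_cnbhd n m v)"
  by (rule finite_subset[OF cnbhd_sub]) simp

lemma in_cnbhd: "u \<in> {1..n} \<Longrightarrow> v \<in> {1..n} \<Longrightarrow> cyc_dist n v u \<le> m \<Longrightarrow> u \<in> cpow_cnbhd n m v"
  unfolding cpow_cnbhd_def cpow_adj_def by auto

definition "ff v m n k = (if v + k < m + 1 then v + k + n - m else if v + k - m \<le> (n::nat) then v + k - m else v + k - m - n)"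
lemma ff_inj: assumes "(v::nat) \<in> {1..n}" "2 * (m + 1) \<le> n" shows "inj_on (ff v m n) {0..2*m}"
proof
  fix x y assume xy: "x \<in> {0..2*m}" "y \<in> {0..2*m}" "ff v m n x = ff v m n y"
  show "x = y"
  proof (cases "v + x < m + 1")
    case True
    then show ?thesis using xy assms unfolding ff_def
      by (cases "v + y < m + 1"; cases "v + y - m \<le> n"; simp; linarith)
  next
    case False
    then show ?thesis using xy assms unfolding ff_def
      by (cases "v + y < m + 1"; cases "v + y - m \<le> n"; cases "v + x - m \<le> n"; simp; linarith)
  qed
qed
lemma cd_le: "(i::nat) \<le> j \<Longrightarrow> (j - i \<le> m \<or> n - (j - i) \<le> m) \<Longrightarrow> cyc_dist n i j \<le> m"
  unfolding cyc_dist_def by auto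
lemma cd_ge: "(j::nat) \<le> i \<Longrightarrow> (i - j \<le> m \<or> n - (i - j) \<le> m) \<Longrightarrow> cyc_dist n i j \<le> m"
  unfolding cyc_dist_def by auto
lemma ff_cd: assumes "(v::nat) \<in> {1..n}" "2 * (m + 1) \<le> n" "k \<le> 2*m"
  shows "cyc_dist n v (ff v m n k) \<le> m \<and> ff v m n k \<in> {1..n}"
proof (cases "v + k < m + 1")
  case True
  then have "ff v m n k = v + k + n - m" unfolding ff_def by simp
  then show ?thesis using assms True by (intro conjI cd_le) auto
next
  case F1: False
  show ?thesis
  proof (cases "v + k - m \<le> n")
    case T2: True
    then have e: "ff v m n k = v + k - m" unfolding ff_def using F1 by simp
    show ?thesis
    proof (cases "k \<le> m")
      case True then show ?thesis using assms F1 T2 e by (intro conjI cd_ge) auto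
    next
      case False then show ?thesis using assms F1 T2 e by (intro conjI cd_le) auto
    qed
  next
    case False
    then have "ff v m n k = v + k - m - n" unfolding ff_def using F1 by simp
    then show ?thesis using assms False by (intro conjI cd_ge) auto
  qed
qed
lemma cd_gt: "(i::nat) \<le> j \<Longrightarrow> j - i > m \<Longrightarrow> n - (j - i) > m \<Longrightarrow> cyc_dist n i j > m"
  unfolding cyc_dist_def by auto

lemma card_cnbhd:
  assumes v: "v \<in> {1..n}" and nm: "2 * (m + 1) \<le> n"
  shows "2 * m + 1 \<le> card (cpow_cnbhd n m v)"
proof -
  define f where "f = ff v m n"
  have inj: "inj_on f {0..2*m}"
    unfolding f_def by (rule ff_inj[OF v nm])
  have sub: "f ` {0..2*m} \<subseteq> cpow_cnbhd n m v"
  proof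
    fix u assume "u \<in> f ` {0..2*m}"
    then obtain k where k: "k \<le> 2*m" "u = f k" by auto
    have "cyc_dist n v u \<le> m \<and> u \<in> {1..n}"
      using ff_cd[OF v nm k(1)] k(2) f_def by simp
    then show "u \<in> cpow_cnbhd n m v"
      using in_cnbhd[of u n v m] v by blast
  qed
  have "card (f ` {0..2*m}) = 2*m+1" using inj by (simp add: card_image)
  moreover have "finite (cpow_cnbhd n m v)" by (rule cnbhd_fin)
  moreover have "card (f ` {0..2*m}) \<le> card (cpow_cnbhd n m v)"
    using calculation(2) sub by (rule card_mono)
  ultimately show ?thesis by simp
qed

lemma upper:
  assumes g: "grundy_dom_seq {1..n} (cpow_cnbhd n m) vs" and n: "0 < n" and nm: "2 * (m + 1) \<le> n"
  shows "length vs \<le> n - 2 * m"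
proof -
  define U where "U i = (\<Union>j<i. cpow_cnbhd n m (vs ! j))" for i
  have fin: "finite (U i)" for i unfolding U_def using cnbhd_fin
    by simp
  have sub: "U i \<subseteq> {1..n}" for i unfolding U_def using cnbhd_sub by (simp add: UN_least)
  from g have d: "distinct vs" "set vs \<subseteq> {1..n}" "(\<Union>v\<in>set vs. cpow_cnbhd n m v) = {1..n}"
    "\<And>i. i < length vs \<Longrightarrow> cpow_cnbhd n m (vs ! i) - U i \<noteq> {}"
    unfolding grundy_dom_seq_def U_def by auto
  have ne: "vs \<noteq> []" using d(3) n by auto
  have key: "1 \<le> i \<Longrightarrow> i \<le> length vs \<Longrightarrow> 2 * m + i \<le> card (U i)" for i
  proof (induction i)
    case 0 then show ?case by simp
  next
    case (Suc i)
    show ?case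
    proof (cases "i = 0")
      case True
      have "U 1 = cpow_cnbhd n m (vs ! 0)" unfolding U_def by auto
      moreover have "vs ! 0 \<in> {1..n}" using d(2) ne by (meson nth_mem subsetD length_greater_0_conv)
      ultimately show ?thesis using True card_cnbhd nm by simp
    next
      case False
      have US: "U (Suc i) = U i \<union> cpow_cnbhd n m (vs ! i)" unfolding U_def
        by (simp add: lessThan_Suc Un_commute)
      have "U i \<subset> U (Suc i)" using d(4)[of i] Suc.prems US by auto
      then have "card (U i) < card (U (Suc i))" using fin psubset_card_mono by blast
      then show ?thesis using Suc False by simp
    qed
  qed
  have "U (length vs) = {1..n}" using d(3) unfolding U_def
    by (metis (no_types, lifting) SUP_cong image_image lessThan_atLeast0 atLeast_upt set_map map_nth)
  then have "2 * m + length vs \<le> n" using key[of "length vs"] ne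
    by (simp add: Suc_leI)
  then show ?thesis by simp
qed

lemma lower:
  assumes n: "0 < n" and m: "0 < m" and nm: "2 * (m + 1) \<le> n"
  shows "grundy_dom_seq {1..n} (cpow_cnbhd n m) [1..<n - 2*m + 1]"
  unfolding grundy_dom_seq_def
proof (intro conjI allI impI)
  show "distinct [1..<n - 2 * m + 1]" by simp
  show "set [1..<n - 2 * m + 1] \<subseteq> {1..n}" by auto
  show "(\<Union>v\<in>set [1..<n - 2 * m + 1]. cpow_cnbhd n m v) = {1..n}"
  proof
    show "(\<Union>v\<in>set [1..<n - 2 * m + 1]. cpow_cnbhd n m v) \<subseteq> {1..n}" using cnbhd_sub by (simp add: UN_least)
  next
    show "{1..n} \<subseteq> (\<Union>v\<in>set [1..<n - 2 * m + 1]. cpow_cnbhd n m v)"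
    proof
      fix u assume u: "u \<in> {1..n}"
      show "u \<in> (\<Union>v\<in>set [1..<n - 2 * m + 1]. cpow_cnbhd n m v)"
      proof (cases "m + 1 < u \<and> u \<le> n - m")
        case True
        have "u \<in> cpow_cnbhd n m (u - m)"
          apply (rule in_cnbhd) using u True nm by (auto intro!: cd_le)
        moreover have "u - m \<in> set [1..<n - 2 * m + 1]" using True by auto
        ultimately show ?thesis by blast
      next
        case False
        have "u \<in> cpow_cnbhd n m 1"
          apply (rule in_cnbhd) using u False nm by (auto intro!: cd_le)
        moreover have "1 \<in> set [1..<n - 2 * m + 1]" using nm by auto
        ultimately show ?thesis by blast
      qed
    qed
  qed
next
  fix i assume i: "i < length [1..<n - 2 * m + 1]"
  then have i': "i < n - 2*m" by (metis length_upt add_diff_cancel_right')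
  have nth: "[1..<n - 2 * m + 1] ! k = k + 1" if "k < n - 2*m" for k
    using that nth_upt[of 1 k "n - 2*m + 1"] by (simp del: upt_Suc)
  have w: "i + 1 + m \<in> cpow_cnbhd n m ([1..<n - 2 * m + 1] ! i)"
    unfolding nth[OF i'] using i' nm by (auto intro!: in_cnbhd cd_le)
  have "i + 1 + m \<notin> cpow_cnbhd n m ([1..<n - 2 * m + 1] ! j)" if j: "j < i" for j
  proof
    assume "i + 1 + m \<in> cpow_cnbhd n m ([1..<n - 2 * m + 1] ! j)"
    then have "cyc_dist n (j+1) (i + 1 + m) \<le> m" using j i'
      unfolding nth[of j] cpow_cnbhd_def cpow_adj_def by (auto simp del: upt_Suc)
    moreover have "cyc_dist n (j+1) (i + 1 + m) > m" using j i' nm by (intro cd_gt) auto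
    ultimately show False by simp
  qed
  then show "cpow_cnbhd n m ([1..<n - 2 * m + 1] ! i) - (\<Union>j<i. cpow_cnbhd n m ([1..<n - 2 * m + 1] ! j)) \<noteq> {}"
    using w by blast
qed

theorem corollary1:
  fixes n m :: nat
  assumes "0 < n" and "0 < m" and "2 * (m + 1) \<le> n"
  shows "grundy_dom_number {1..n} (cpow_cnbhd n m) = n - 2 * m"
proof -
  let ?S = "length ` {vs. grundy_dom_seq {1..n} (cpow_cnbhd n m) vs}"
  have "?S \<subseteq> {..n - 2*m}" using upper assms by auto
  then have fin: "finite ?S" using finite_subset by blast
  have mem: "n - 2*m \<in> ?S"
    using lower[OF assms] by (metis (mono_tags, lifting) image_eqI mem_Collect_eq length_upt add_diff_cancel_right')
  show ?thesis unfolding grundy_dom_number_def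
    by (rule Max_eqI[OF fin]) (use \<open>?S \<subseteq> _\<close> mem in auto)
qed

end
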